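(* Let $(X,T)$ be a minimal topological dynamical system. Then $(X,T)$ is strongly $\mathcal{F}_{ip}$-sensitive if and only if there is $\delta>0$ such that for every non-empty open subset $U$ of $X$ there are $x\in U$ and $y\in X$ with $d(x,y)>\delta$ and $x$ strongly proximal to $y$.
   Context: A topological dynamical system: compact metric space $(X,d)$ with continuous surjection $T$; minimal means every orbit is dense. $x$ is strongly proximal to $y$ if $(y,y)$ belongs to the $\omega$-limit set of $(x,y)$ under $T\times T$, i.e. there are $n_k\to\infty$ with $T^{n_k}x\to y$ and $T^{n_k}y\to y$. $\mathcal{F}_{ip}$ is the family of subsets of $\mathbb{Z}_+$ containing some $FS((p_i)_{i=1}^\infty)=\{\sum_{i\in\alpha}p_i:\alpha$ finite nonempty$\}$, $p_i\in\mathbb{N}$. $(X,T)$ is strongly $\mathcal{F}_{ip}$-sensitive if there is $\delta>0$ such that for each nonempty open $U$ there are $x,y\in U$ with $\{n\in\mathbb{Z}_+:d(T^nx,T^ny)>\delta\}\in\mathcal{F}_{ip}$. *)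

theory Defs
  imports "HOL-Analysis.Analysis"
begin

definition tds :: "'a::metric_space set \<Rightarrow> ('a \<Rightarrow> 'a) \<Rightarrow> bool" where
  "tds X T \<longleftrightarrow> X \<noteq> {} \<and> compact X \<and> continuous_on X T \<and> T ` X = X"

definition minimal_tds :: "'a::metric_space set \<Rightarrow> ('a \<Rightarrow> 'a) \<Rightarrow> bool" where
  "minimal_tds X T \<longleftrightarrow> tds X T \<and>
     (\<forall>x\<in>X. X \<subseteq> closure {(T ^^ n) x | n. True})"

definition FS :: "(nat \<Rightarrow> nat) \<Rightarrow> nat set" where
  "FS p = {sum p \<alpha> | \<alpha>. finite \<alpha> \<and> \<alpha> \<noteq> {}}"

definition F_ip :: "nat set set" where
  "F_ip = {S. \<exists>p. (\<forall>i. p i > 0) \<and> FS p \<subseteq> S}"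

definition strongly_proximal :: "('a::metric_space \<Rightarrow> 'a) \<Rightarrow> 'a \<Rightarrow> 'a \<Rightarrow> bool" where
  "strongly_proximal T x y \<longleftrightarrow>
     (\<exists>n::nat \<Rightarrow> nat. strict_mono n \<and>
        ((\<lambda>k. (T ^^ n k) x) \<longlongrightarrow> y) sequentially \<and>
        ((\<lambda>k. (T ^^ n k) y) \<longlongrightarrow> y) sequentially)"

definition strongly_F_ip_sensitive :: "'a::metric_space set \<Rightarrow> ('a \<Rightarrow> 'a) \<Rightarrow> bool" where
  "strongly_F_ip_sensitive X T \<longleftrightarrow>
     (\<exists>\<delta>>0. \<forall>U. openin (top_of_set X) U \<and> U \<noteq> {} \<longrightarrow>
        (\<exists>x\<in>U. \<exists>y\<in>U. {n. dist ((T ^^ n) x) ((T ^^ n) y) > \<delta>} \<in> F_ip))"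

end

theory Submission
  imports Defs
begin


lemma iter_in: "T ` X \<subseteq> X \<Longrightarrow> x \<in> X \<Longrightarrow> (T ^^ n) x \<in> X"
  by (induction n) auto

lemma iter_cont:
  assumes "continuous_on X T" "T ` X \<subseteq> X"
  shows "continuous_on X (T ^^ n)"
proof (induction n)
  case 0 then show ?case by (simp add: continuous_on_id)
next
  case (Suc n)
  have "continuous_on X (\<lambda>z. T ((T ^^ n) z))"
    by (rule continuous_on_compose2[OF assms(1) Suc]) (use iter_in[OF assms(2)] in auto)
  then show ?case by (simp add: comp_def)
qed

lemma iter_comm: "(T ^^ s) ((T ^^ q) y) = (T ^^ q) ((T ^^ s) y)"
  by (metis comp_apply funpow_add add.commute)

lemma iter_add: "(T ^^ (n + s)) x = (T ^^ s) ((T ^^ n) x)"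
  by (metis comp_apply funpow_add add.commute)

lemma sp_step:
  fixes T :: "'a::metric_space \<Rightarrow> 'a"
  assumes cont: "continuous_on X T" and TX: "T ` X \<subseteq> X" and xX: "x \<in> X" and yX: "y \<in> X"
    and sp: "strongly_proximal T x y" and e: "e > 0"
    and A: "finite A" "\<forall>s\<in>A. s \<noteq> 0 \<longrightarrow> dist ((T^^s) x) y < e \<and> dist ((T^^s) y) y < e"
  shows "\<exists>n>0. \<forall>s\<in>A. dist ((T^^(n+s)) x) y < e \<and> dist ((T^^(n+s)) y) y < e"
proof -
  obtain r where r: "strict_mono r" "(\<lambda>k. (T ^^ r k) x) \<longlonglongrightarrow> y" "(\<lambda>k. (T ^^ r k) y) \<longlonglongrightarrow> y"
    using sp unfolding strongly_proximal_def by blast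
  have ev: "eventually (\<lambda>k. dist ((T^^(r k+s)) x) y < e \<and> dist ((T^^(r k+s)) y) y < e) sequentially"
    if "s \<in> A" for s
  proof -
    have lim: "dist ((T^^s) y) y < e" using A that e by (cases "s = 0") auto
    have "(\<lambda>k. (T^^s) ((T ^^ r k) z)) \<longlonglongrightarrow> (T^^s) y" if "z \<in> X" "(\<lambda>k. (T ^^ r k) z) \<longlonglongrightarrow> y" for z
      by (rule continuous_on_tendsto_compose[OF iter_cont[OF cont TX] that(2) yX])
         (use iter_in[OF TX that(1)] in auto)
    then have t1: "(\<lambda>k. (T^^(r k+s)) x) \<longlonglongrightarrow> (T^^s) y" and t2: "(\<lambda>k. (T^^(r k+s)) y) \<longlonglongrightarrow> (T^^s) y"
      using r xX yX by (simp_all add: iter_add)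
    have "eventually (\<lambda>k. dist ((T^^(r k+s)) x) y < e) sequentially"
      using order_tendstoD(2)[OF tendsto_dist[OF t1 tendsto_const] lim] .
    moreover have "eventually (\<lambda>k. dist ((T^^(r k+s)) y) y < e) sequentially"
      using order_tendstoD(2)[OF tendsto_dist[OF t2 tendsto_const] lim] .
    ultimately show ?thesis by (rule eventually_conj)
  qed
  have "eventually (\<lambda>k. \<forall>s\<in>A. dist ((T^^(r k+s)) x) y < e \<and> dist ((T^^(r k+s)) y) y < e) sequentially"
    by (rule eventually_ball_finite[OF A(1)]) (use ev in blast)
  moreover have "eventually (\<lambda>k. r k > 0) sequentially"
  proof -
    have "k \<ge> 1 \<Longrightarrow> r k > 0" for k using seq_suble[OF r(1), of k] by linarith
    then show ?thesis unfolding eventually_sequentially by blast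
  qed
  ultimately have "eventually (\<lambda>k. r k > 0 \<and> (\<forall>s\<in>A. dist ((T^^(r k+s)) x) y < e \<and> dist ((T^^(r k+s)) y) y < e)) sequentially"
    by (simp add: eventually_conj_iff)
  then obtain N where "\<forall>k\<ge>N. r k > 0 \<and> (\<forall>s\<in>A. dist ((T^^(r k+s)) x) y < e \<and> dist ((T^^(r k+s)) y) y < e)"
    unfolding eventually_sequentially by blast
  then show ?thesis by blast
qed

definition nxt :: "('a::metric_space \<Rightarrow> 'a) \<Rightarrow> 'a \<Rightarrow> 'a \<Rightarrow> real \<Rightarrow> nat set \<Rightarrow> nat" where
  "nxt T x y e A = (SOME n. n>0 \<and> (\<forall>s\<in>A. dist ((T^^(n+s)) x) y < e \<and> dist ((T^^(n+s)) y) y < e))"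

primrec Aseq :: "('a::metric_space \<Rightarrow> 'a) \<Rightarrow> 'a \<Rightarrow> 'a \<Rightarrow> real \<Rightarrow> nat \<Rightarrow> nat set" where
  "Aseq T x y e 0 = {0}"
| "Aseq T x y e (Suc j) = Aseq T x y e j \<union> (\<lambda>s. nxt T x y e (Aseq T x y e j) + s) ` Aseq T x y e j"

lemma sp_IP:
  fixes T :: "'a::metric_space \<Rightarrow> 'a"
  assumes cont: "continuous_on X T" and TX: "T ` X \<subseteq> X" and xX: "x \<in> X" and yX: "y \<in> X"
    and sp: "strongly_proximal T x y" and e: "e > 0"
  shows "\<exists>p. (\<forall>i. p i > 0) \<and> (\<forall>s\<in>FS p. dist ((T^^s) x) y < e \<and> dist ((T^^s) y) y < e)"
proof -
  let ?A = "Aseq T x y e"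
  define p where "p j = nxt T x y e (?A j)" for j
  have inv: "finite (?A j) \<and> (\<forall>s\<in>?A j. s \<noteq> 0 \<longrightarrow> dist ((T^^s) x) y < e \<and> dist ((T^^s) y) y < e)
      \<and> p j > 0" for j
  proof (induction j)
    case 0
    have "\<exists>n>0. \<forall>s\<in>?A 0. dist ((T^^(n+s)) x) y < e \<and> dist ((T^^(n+s)) y) y < e"
      by (rule sp_step[OF cont TX xX yX sp e]) auto
    then have "p 0 > 0" unfolding p_def nxt_def by (rule someI2_ex) auto
    then show ?case by simp
  next
    case (Suc j)
    have ex: "\<exists>n>0. \<forall>s\<in>?A j. dist ((T^^(n+s)) x) y < e \<and> dist ((T^^(n+s)) y) y < e"
      by (rule sp_step[OF cont TX xX yX sp e]) (use Suc in auto)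
    have pj: "p j > 0 \<and> (\<forall>s\<in>?A j. dist ((T^^(p j+s)) x) y < e \<and> dist ((T^^(p j+s)) y) y < e)"
      unfolding p_def nxt_def by (rule someI_ex[OF ex])
    have fin: "finite (?A (Suc j))" using Suc by simp
    have good: "\<forall>s\<in>?A (Suc j). s \<noteq> 0 \<longrightarrow> dist ((T^^s) x) y < e \<and> dist ((T^^s) y) y < e"
      using Suc pj by (auto simp: p_def)
    have ex2: "\<exists>n>0. \<forall>s\<in>?A (Suc j). dist ((T^^(n+s)) x) y < e \<and> dist ((T^^(n+s)) y) y < e"
      by (rule sp_step[OF cont TX xX yX sp e fin good])
    have "p (Suc j) > 0" unfolding p_def nxt_def by (rule someI2_ex[OF ex2]) auto
    with fin good show ?case by blast
  qed
  have mem: "\<alpha> \<subseteq> {..<j} \<Longrightarrow> sum p \<alpha> \<in> ?A j" for \<alpha> j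
  proof (induction j arbitrary: \<alpha>)
    case 0 then show ?case by simp
  next
    case (Suc j)
    show ?case
    proof (cases "j \<in> \<alpha>")
      case False
      then have "\<alpha> \<subseteq> {..<j}" using Suc.prems by (auto simp: less_Suc_eq)
      then show ?thesis using Suc.IH by simp
    next
      case True
      have fa: "finite \<alpha>" using Suc.prems finite_subset by blast
      have "\<alpha> - {j} \<subseteq> {..<j}" using Suc.prems by (auto simp: less_Suc_eq)
      then have "sum p (\<alpha> - {j}) \<in> ?A j" using Suc.IH by blast
      moreover have "sum p \<alpha> = p j + sum p (\<alpha> - {j})" using True fa by (simp add: sum.remove)
      ultimately show ?thesis by (simp add: p_def)
    qed
  qed
  have "\<forall>s\<in>FS p. dist ((T^^s) x) y < e \<and> dist ((T^^s) y) y < e"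
  proof
    fix s assume "s \<in> FS p"
    then obtain \<alpha> where a: "s = sum p \<alpha>" "finite \<alpha>" "\<alpha> \<noteq> {}" unfolding FS_def by blast
    have "\<alpha> \<subseteq> {..<Suc (Max \<alpha>)}" using a by (auto simp: le_imp_less_Suc)
    then have "s \<in> ?A (Suc (Max \<alpha>))" using mem a by blast
    moreover have "s \<noteq> 0" using a inv by (simp add: sum_nonneg_eq_0_iff) (metis all_not_in_conv not_less0 gr_implies_not0)
    ultimately show "dist ((T^^s) x) y < e \<and> dist ((T^^s) y) y < e" using inv by blast
  qed
  moreover have "\<forall>i. p i > 0" using inv by blast
  ultimately show ?thesis by blast
qed


lemma dir_back:
  fixes X :: "'a::metric_space set" and T :: "'a \<Rightarrow> 'a"
  assumes m: "minimal_tds X T" and d: "\<delta> > 0"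
    and H: "\<forall>U. openin (top_of_set X) U \<and> U \<noteq> {} \<longrightarrow> (\<exists>x\<in>U. \<exists>y\<in>X. dist x y > \<delta> \<and> strongly_proximal T x y)"
  shows "strongly_F_ip_sensitive X T"
  unfolding strongly_F_ip_sensitive_def
proof (intro exI[of _ "\<delta>/4"] conjI allI impI)
  show "\<delta>/4 > 0" using d by simp
  have cont: "continuous_on X T" and TX: "T ` X \<subseteq> X"
    and dense: "\<forall>x\<in>X. X \<subseteq> closure {(T ^^ n) x | n. True}"
    using m unfolding minimal_tds_def tds_def by auto
  fix U assume U: "openin (top_of_set X) U \<and> U \<noteq> {}"
  then obtain u0 where u0: "u0 \<in> U" by blast
  define U' where "U' = U \<inter> ball u0 (\<delta>/8)"
  have U'o: "openin (top_of_set X) U'" unfolding U'_def using U by (simp add: openin_Int_open)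
  have "u0 \<in> U'" using u0 d by (simp add: U'_def)
  then obtain x y where x: "x \<in> U'" and yX: "y \<in> X" and dxy: "dist x y > \<delta>" and sp: "strongly_proximal T x y"
    using H U'o by blast
  have xX: "x \<in> X" using x U'o openin_imp_subset by blast
  obtain V where V: "open V" "U' = X \<inter> V" using U'o by (auto simp: openin_open)
  have "x \<in> closure {(T ^^ n) y | n. True}" using dense yX xX by blast
  then have "V \<inter> {(T ^^ n) y | n. True} \<noteq> {}" using V x open_Int_closure_eq_empty by blast
  then obtain q where qV: "(T^^q) y \<in> V" by blast
  define b where "b = (T^^q) y"
  have bU': "b \<in> U'" using qV V iter_in[OF TX yX] by (simp add: b_def)
  have "dist x b < \<delta>/4"
  proof -
    have "dist x u0 < \<delta>/8" "dist b u0 < \<delta>/8" using x bU' by (auto simp: U'_def dist_commute)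
    then show ?thesis using dist_triangle[of x b u0] by (simp add: dist_commute)
  qed
  then have dyb: "dist y b > 3*\<delta>/4" using dxy dist_triangle[of x y b] by (simp add: dist_commute)
  obtain \<eta> where eta: "\<eta> > 0" "\<forall>z\<in>X. dist z y < \<eta> \<longrightarrow> dist ((T^^q) z) ((T^^q) y) < \<delta>/8"
  proof -
    have "\<forall>e>0. \<exists>d>0. \<forall>z\<in>X. dist z y < d \<longrightarrow> dist ((T^^q) z) ((T^^q) y) < e"
      using iter_cont[OF cont TX, of q] yX unfolding continuous_on_iff by blast
    then show ?thesis using that d by (meson divide_pos_pos zero_less_numeral)
  qed
  obtain p where p: "\<forall>i. p i > 0" "\<forall>s\<in>FS p. dist ((T^^s) x) y < min \<eta> (\<delta>/8) \<and> dist ((T^^s) y) y < min \<eta> (\<delta>/8)"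
    using sp_IP[OF cont TX xX yX sp, of "min \<eta> (\<delta>/8)"] eta d by auto
  have "FS p \<subseteq> {n. dist ((T ^^ n) x) ((T ^^ n) b) > \<delta>/4}"
  proof
    fix s assume s: "s \<in> FS p"
    have a1: "dist ((T^^s) x) y < \<delta>/8" using p s by auto
    have "dist ((T^^s) y) y < \<eta>" using p s by auto
    then have a2: "dist ((T^^s) b) b < \<delta>/8" using eta iter_in[OF TX yX, of s]
      by (simp add: b_def iter_comm)
    have "dist y b \<le> dist y ((T^^s) x) + dist ((T^^s) x) b" by (rule dist_triangle)
    moreover have "dist ((T^^s) x) b \<le> dist ((T^^s) x) ((T^^s) b) + dist ((T^^s) b) b" by (rule dist_triangle)
    ultimately have "dist y b \<le> dist y ((T^^s) x) + dist ((T^^s) x) ((T^^s) b) + dist ((T^^s) b) b" by linarith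
    moreover have a1': "dist y ((T^^s) x) < \<delta>/8" using a1 by (simp add: dist_commute)
    ultimately have "\<delta>/4 < dist ((T^^s) x) ((T^^s) b)" using a2 dyb d by argo
    then show "s \<in> {n. dist ((T ^^ n) x) ((T ^^ n) b) > \<delta>/4}" by simp
  qed
  then have "{n. dist ((T ^^ n) x) ((T ^^ n) b) > \<delta>/4} \<in> F_ip" unfolding F_ip_def using p(1) by blast
  moreover have "x \<in> U" "b \<in> U" using x bU' by (auto simp: U'_def)
  ultimately show "\<exists>x\<in>U. \<exists>y\<in>U. {n. \<delta>/4 < dist ((T ^^ n) x) ((T ^^ n) y)} \<in> F_ip" by blast
qed



lemma Haus_fun: "Hausdorff_space (euclidean :: ('a \<Rightarrow> 'b::metric_space) topology)"
  by (metis Hausdorff_space_euclidean Hausdorff_space_product_topology euclidean_product_topology)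

lemma compact_imp_closed_fun: "compact (S :: ('a \<Rightarrow> 'b::metric_space) set) \<Longrightarrow> closed S"
  by (metis Haus_fun closed_closedin compactin_euclidean_iff compactin_imp_closedin)

lemma closed_sing_fun: "closed {u :: 'a \<Rightarrow> 'b::metric_space}"
  by (metis Haus_fun closed_closedin closedin_Hausdorff_singleton UNIV_I topspace_euclidean)

lemma cont_rcomp: "continuous_on S (\<lambda>f::'a \<Rightarrow> 'b::topological_space. f \<circ> g)"
  by (intro continuous_on_coordinatewise_then_product)
     (simp add: comp_def, rule continuous_on_subset[OF continuous_on_product_coordinates], simp)

lemma ellis:
  fixes P :: "('a::metric_space \<Rightarrow> 'a) set"
  assumes cP: "compact P" and ne: "P \<noteq> {}" and sg: "\<forall>f\<in>P. \<forall>g\<in>P. f \<circ> g \<in> P"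
  shows "\<exists>u\<in>P. u \<circ> u = u"
proof -
  define \<A> where "\<A> = {A. A \<subseteq> P \<and> A \<noteq> {} \<and> closed A \<and> (\<forall>f\<in>A. \<forall>g\<in>A. f \<circ> g \<in> A)}"
  have PA: "P \<in> \<A>" using cP ne sg by (simp add: \<A>_def compact_imp_closed_fun)
  have "\<exists>M\<in>uminus ` \<A>. \<forall>Y\<in>uminus ` \<A>. M \<subseteq> Y \<longrightarrow> Y = M"
  proof (rule subset_Zorn_nonempty)
    show "uminus ` \<A> \<noteq> {}" using PA by blast
  next
    fix C assume Cne: "C \<noteq> {}" and ch: "subset.chain (uminus ` \<A>) C"
    define D where "D = uminus ` C"
    have DA: "D \<subseteq> \<A>" using ch unfolding D_def subset.chain_def by auto
    have "\<forall>x\<in>C. \<forall>y\<in>C. x \<subseteq> y \<or> y \<subseteq> x" using ch by (simp add: subset.chain_def) blast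
    then have "\<forall>X\<in>D. \<forall>Y\<in>D. X \<subseteq> Y \<or> Y \<subseteq> X" unfolding D_def by (simp add: Compl_subset_Compl_iff)
    then have chD: "subset.chain \<A> D" using DA unfolding subset.chain_def by blast
    have Dne: "D \<noteq> {}" using Cne by (simp add: D_def)
    have UC: "\<Union>C = - \<Inter>D" by (auto simp: D_def)
    have "\<Inter>D \<in> \<A>"
    proof -
      have sub: "\<Inter>D \<subseteq> P" using DA Dne unfolding \<A>_def by blast
      have cl: "closed (\<Inter>D)" using DA unfolding \<A>_def by (auto intro: closed_Inter)
      have sgD: "\<forall>f\<in>\<Inter>D. \<forall>g\<in>\<Inter>D. f \<circ> g \<in> \<Inter>D" using DA unfolding \<A>_def by blast
      have "P \<inter> \<Inter>D \<noteq> {}"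
      proof (rule compact_imp_fip[OF cP])
        show "\<And>T. T \<in> D \<Longrightarrow> closed T" using DA unfolding \<A>_def by blast
      next
        fix F' assume F': "finite F'" "F' \<subseteq> D"
        show "P \<inter> \<Inter>F' \<noteq> {}"
        proof (cases "F' = {}")
          case True then show ?thesis using ne by simp
        next
          case False
          have "subset.chain \<A> F'" using chD F' unfolding subset.chain_def by blast
          then have "\<Inter>F' \<in> F'" using Inter_in_chain[OF F'(1) False] by blast
          then have "\<Inter>F' \<in> \<A>" using F' DA by blast
          then show ?thesis unfolding \<A>_def by auto
        qed
      qed
      then have "\<Inter>D \<noteq> {}" by blast
      then show ?thesis using sub cl sgD unfolding \<A>_def by blast
    qed
    then show "\<Union>C \<in> uminus ` \<A>" unfolding UC by blast
  qed
  then obtain A where AA: "A \<in> \<A>" and minA: "\<forall>B\<in>\<A>. B \<subseteq> A \<longrightarrow> B = A"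
    by (auto simp: Compl_subset_Compl_iff)
  from AA have Asub: "A \<subseteq> P" and Ane: "A \<noteq> {}" and Acl: "closed A" and Asg: "\<forall>f\<in>A. \<forall>g\<in>A. f \<circ> g \<in> A"
    unfolding \<A>_def by auto
  obtain u where uA: "u \<in> A" using Ane by blast
  have cA: "compact A" using compact_Int_closed[OF cP Acl] Asub by (simp add: Int_absorb1)
  define Au where "Au = (\<lambda>f. f \<circ> u) ` A"
  have "Au \<in> \<A>"
  proof -
    have "Au \<subseteq> A" using Asg uA by (auto simp: Au_def)
    moreover have "closed Au" unfolding Au_def
      by (rule compact_imp_closed_fun, rule compact_continuous_image[OF cont_rcomp cA])
    moreover have "\<forall>f\<in>Au. \<forall>g\<in>Au. f \<circ> g \<in> Au"
    proof (intro ballI)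
      fix f g assume "f \<in> Au" "g \<in> Au"
      then obtain f' g' where "f' \<in> A" "g' \<in> A" "f = f' \<circ> u" "g = g' \<circ> u" by (auto simp: Au_def)
      then show "f \<circ> g \<in> Au" unfolding Au_def using Asg uA
        by (intro image_eqI[of _ _ "f' \<circ> u \<circ> g'"]) (auto simp: comp_assoc)
    qed
    ultimately show ?thesis using Asub Ane unfolding \<A>_def Au_def by blast
  qed
  moreover have "Au \<subseteq> A" using Asg uA by (auto simp: Au_def)
  ultimately have "Au = A" using minA by blast
  then obtain v where vA: "v \<in> A" and vu: "v \<circ> u = u" using uA unfolding Au_def by (metis imageE)
  define B where "B = A \<inter> (\<lambda>f. f \<circ> u) -` {u}"
  have "B \<in> \<A>"
  proof -
    have "closed B" unfolding B_def
      by (intro closed_Int Acl closed_vimage cont_rcomp closed_sing_fun)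
    moreover have "\<forall>f\<in>B. \<forall>g\<in>B. f \<circ> g \<in> B" using Asg unfolding B_def by (auto simp: comp_assoc)
    moreover have "B \<noteq> {}" using vA vu unfolding B_def by blast
    ultimately show ?thesis using Asub unfolding \<A>_def B_def by blast
  qed
  then have "B = A" using minA unfolding B_def by blast
  then have "u \<circ> u = u" using uA unfolding B_def by blast
  then show ?thesis using uA Asub by blast
qed


definition R :: "'a set \<Rightarrow> ('a \<Rightarrow> 'a) \<Rightarrow> nat \<Rightarrow> 'a \<Rightarrow> 'a" where
  "R X T n = (\<lambda>z. if z \<in> X then (T ^^ n) z else z)"

definition G :: "(nat \<Rightarrow> nat) \<Rightarrow> nat \<Rightarrow> nat set" where
  "G p j = {sum p \<alpha> | \<alpha>. finite \<alpha> \<and> \<alpha> \<noteq> {} \<and> \<alpha> \<subseteq> {j..} \<and> sum p \<alpha> \<ge> j}"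

lemma G_FS: "G p j \<subseteq> FS p"
proof
  fix s assume "s \<in> G p j"
  then obtain \<alpha> where "s = sum p \<alpha>" "finite \<alpha>" "\<alpha> \<noteq> {}" unfolding G_def by blast
  then show "s \<in> FS p" unfolding FS_def by blast
qed

lemma G_ge: assumes "s \<in> G p j" shows "s \<ge> j"
proof -
  obtain \<alpha> where "s = sum p \<alpha>" "sum p \<alpha> \<ge> j" using assms unfolding G_def by blast
  then show ?thesis by simp
qed

lemma G_mono: "j \<le> k \<Longrightarrow> G p k \<subseteq> G p j"
proof
  fix s assume jk: "j \<le> k" and "s \<in> G p k"
  then obtain \<alpha> where a: "s = sum p \<alpha>" "finite \<alpha>" "\<alpha> \<noteq> {}" "\<alpha> \<subseteq> {k..}" "sum p \<alpha> \<ge> k"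
    unfolding G_def by blast
  have "\<alpha> \<subseteq> {j..}" using a(4) jk by auto
  moreover have "sum p \<alpha> \<ge> j" using a(5) jk by linarith
  ultimately show "s \<in> G p j" unfolding G_def using a by blast
qed

lemma G_ne:
  assumes "\<forall>i. p i > 0" shows "G p j \<noteq> {}"
proof -
  have "card {j..j+j} \<le> sum p {j..j+j}"
    using sum_mono[of "{j..j+j}" "\<lambda>_. 1::nat" p] assms by (simp add: Suc_le_eq)
  then have "sum p {j..j+j} \<in> G p j" unfolding G_def by force
  then show ?thesis by blast
qed

lemma G_add:
  assumes "s \<in> G p j" shows "\<exists>N. \<forall>t\<in>G p N. s + t \<in> G p j"
proof -
  obtain \<alpha> where a: "s = sum p \<alpha>" "finite \<alpha>" "\<alpha> \<noteq> {}" "\<alpha> \<subseteq> {j..}" "sum p \<alpha> \<ge> j"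
    using assms unfolding G_def by blast
  have "s + t \<in> G p j" if tG: "t \<in> G p (Suc (Max \<alpha>))" for t
  proof -
    obtain \<beta> where b: "t = sum p \<beta>" "finite \<beta>" "\<beta> \<noteq> {}" "\<beta> \<subseteq> {Suc (Max \<alpha>)..}"
      using tG unfolding G_def by blast
    have disj: "\<alpha> \<inter> \<beta> = {}" using b(4) a(2) Max_ge by fastforce
    have "s + t = sum p (\<alpha> \<union> \<beta>)" using a b disj by (simp add: sum.union_disjoint)
    moreover have "\<alpha> \<union> \<beta> \<subseteq> {j..}"
    proof -
      have "Max \<alpha> \<ge> j" using a(2,3,4) by (meson Max_in atLeast_iff subsetD)
      then show ?thesis using a(4) b(4) by auto
    qed
    ultimately show ?thesis unfolding G_def using a b by (intro CollectI exI[of _ "\<alpha> \<union> \<beta>"]) auto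
  qed
  then show ?thesis by blast
qed

lemma idem_exists:
  fixes X :: "'a::metric_space set" and T :: "'a \<Rightarrow> 'a"
  assumes cX: "compact X" and XN: "X \<noteq> {}" and cont: "continuous_on X T" and TX: "T ` X \<subseteq> X"
    and pp: "\<forall>i. p i > 0"
  shows "\<exists>u. (\<forall>z\<in>X. u z \<in> X) \<and> u \<circ> u = u \<and> (\<forall>j. u \<in> closure (R X T ` G p j))"
proof -
  define S where "S = (\<lambda>z. if z \<in> X then X else {z})"
  define K where "K = Pi\<^sub>E UNIV S"
  have Kc: "f \<in> K \<longleftrightarrow> (\<forall>z. f z \<in> S z)" for f by (simp add: K_def PiE_iff)
  have cK: "compact K"
  proof -
    have "compactin (product_topology (\<lambda>_. euclidean) UNIV) K"
      unfolding K_def compactin_PiE by (auto simp: S_def cX)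
    then show ?thesis by (simp add: euclidean_product_topology)
  qed
  have clK: "closed K" by (rule compact_imp_closed_fun[OF cK])
  have RK: "R X T n \<in> K" for n using iter_in[OF TX] by (auto simp: Kc S_def R_def)
  have Rc: "R X T s \<circ> R X T t = R X T (s + t)" for s t
    using iter_in[OF TX] by (auto simp: R_def fun_eq_iff funpow_add)
  define C where "C j = closure (R X T ` G p j)" for j
  have CK: "C j \<subseteq> K" for j unfolding C_def by (rule closure_minimal) (use RK clK in auto)
  have Cne: "C j \<noteq> {}" for j using G_ne[OF pp] closure_subset unfolding C_def by blast
  have Cmono: "j \<le> k \<Longrightarrow> C k \<subseteq> C j" for j k unfolding C_def
    by (intro closure_mono image_mono G_mono)
  define P where "P = \<Inter> (range C)"
  have PK: "P \<subseteq> K" using CK unfolding P_def by blast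
  have clP: "closed P" unfolding P_def C_def by auto
  have cP: "compact P" using compact_Int_closed[OF cK clP] PK by (simp add: Int_absorb1)
  have Pne: "P \<noteq> {}"
  proof -
    have "K \<inter> \<Inter>(range C) \<noteq> {}"
    proof (rule compact_imp_fip[OF cK])
      show "\<And>T. T \<in> range C \<Longrightarrow> closed T" unfolding C_def by auto
    next
      fix F' assume F': "finite F'" "F' \<subseteq> range C"
      then obtain J where J: "finite J" "F' = C ` J" by (meson finite_subset_image)
      show "K \<inter> \<Inter>F' \<noteq> {}"
      proof (cases "J = {}")
        case True then show ?thesis using J RK by auto
      next
        case False
        have "\<forall>k\<in>J. C (Max J) \<subseteq> C k" using Cmono Max_ge[OF J(1)] by blast
        then have "C (Max J) \<subseteq> \<Inter>F'" using J by auto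
        then show ?thesis using Cne CK by blast
      qed
    qed
    then show ?thesis unfolding P_def by blast
  qed
  have lcont: "continuous_on K (\<lambda>h. R X T s \<circ> h)" for s
  proof (intro continuous_on_coordinatewise_then_product)
    fix i
    show "continuous_on K (\<lambda>h. (R X T s \<circ> h) i)"
    proof (cases "i \<in> X")
      case True
      have hiX: "h i \<in> X" if "h \<in> K" for h
      proof -
        have "h i \<in> S i" using that Kc by blast
        then show ?thesis using True by (simp add: S_def)
      qed
      have "continuous_on K (\<lambda>h. (T^^s) (h i))"
        by (rule continuous_on_compose2[OF iter_cont[OF cont TX]])
           (auto intro: continuous_on_subset[OF continuous_on_product_coordinates] hiX)
      then show ?thesis
        by (rule continuous_on_cong[THEN iffD1, rotated 2]) (auto simp: R_def hiX)
    next
      case False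
      have hi: "h i = i" if "h \<in> K" for h
      proof -
        have "h i \<in> S i" using that Kc by blast
        then show ?thesis using False by (simp add: S_def)
      qed
      have "continuous_on K (\<lambda>h. R X T s i)" by (rule continuous_on_const)
      then show ?thesis
        by (rule continuous_on_cong[THEN iffD1, rotated 2]) (auto simp: hi)
    qed
  qed
  have sgP: "\<forall>f\<in>P. \<forall>g\<in>P. f \<circ> g \<in> P"
  proof (intro ballI)
    fix f g assume f: "f \<in> P" and g: "g \<in> P"
    have "f \<circ> g \<in> C j" for j
    proof -
      have step1: "R X T s \<circ> g \<in> C j" if s: "s \<in> G p j" for s
      proof -
        obtain N where N: "\<forall>t\<in>G p N. s + t \<in> G p j" using G_add[OF s] by blast
        have "(\<lambda>h. R X T s \<circ> h) ` closure (R X T ` G p N) \<subseteq> C j"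
        proof (rule image_closure_subset)
          show "continuous_on (closure (R X T ` G p N)) (\<lambda>h. R X T s \<circ> h)"
            by (rule continuous_on_subset[OF lcont]) (use CK in \<open>simp add: C_def\<close>)
          show "closed (C j)" by (simp add: C_def)
          show "(\<lambda>h. R X T s \<circ> h) ` R X T ` G p N \<subseteq> C j"
            using N closure_subset unfolding C_def by (fastforce simp: Rc)
        qed
        moreover have "g \<in> closure (R X T ` G p N)" using g unfolding P_def C_def by blast
        ultimately show ?thesis by blast
      qed
      have "(\<lambda>h. h \<circ> g) ` closure (R X T ` G p j) \<subseteq> C j"
      proof (rule image_closure_subset)
        show "continuous_on (closure (R X T ` G p j)) (\<lambda>h. h \<circ> g)" by (rule cont_rcomp)
        show "closed (C j)" by (simp add: C_def)
        show "(\<lambda>h. h \<circ> g) ` R X T ` G p j \<subseteq> C j" using step1 by auto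
      qed
      moreover have "f \<in> closure (R X T ` G p j)" using f unfolding P_def C_def by blast
      ultimately show ?thesis by blast
    qed
    then show "f \<circ> g \<in> P" unfolding P_def by blast
  qed
  obtain u where uP: "u \<in> P" and uu: "u \<circ> u = u" using ellis[OF cP Pne sgP] by blast
  have "\<forall>z\<in>X. u z \<in> X" using uP PK by (auto simp: Kc S_def split: if_splits)
  moreover have "\<forall>j. u \<in> closure (R X T ` G p j)" using uP unfolding P_def C_def by blast
  ultimately show ?thesis using uu by blast
qed


lemma approx:
  fixes u :: "'a::metric_space \<Rightarrow> 'a"
  assumes u: "u \<in> closure (R X T ` S)" and I: "finite I" and e: "e > 0"
  shows "\<exists>s\<in>S. \<forall>i\<in>I. dist (R X T s i) (u i) < e"
proof -
  define W where "W = {f. \<forall>i\<in>I. f (id i) \<in> ball (u i) e}"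
  have "open W" unfolding W_def by (rule product_topology_basis') (auto simp: I)
  moreover have "u \<in> W" using e by (simp add: W_def)
  ultimately have "W \<inter> R X T ` S \<noteq> {}" using u open_Int_closure_eq_empty by blast
  then obtain s where "s \<in> S" "R X T s \<in> W" by blast
  then show ?thesis by (auto simp: W_def dist_commute)
qed

lemma sp_of_freq:
  fixes T :: "'a::metric_space \<Rightarrow> 'a"
  assumes H: "\<forall>e>0. \<forall>N. \<exists>s\<ge>N. dist ((T^^s) a) b < e \<and> dist ((T^^s) b) b < e"
  shows "strongly_proximal T a b"
proof -
  define pick where "pick N k = (SOME s. s \<ge> N \<and> dist ((T^^s) a) b < 1/real (Suc k) \<and> dist ((T^^s) b) b < 1/real (Suc k))" for N k
  have pickP: "pick N k \<ge> N \<and> dist ((T^^pick N k) a) b < 1/real (Suc k) \<and> dist ((T^^pick N k) b) b < 1/real (Suc k)" for N k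
  proof -
    have "\<exists>s\<ge>N. dist ((T^^s) a) b < 1/real (Suc k) \<and> dist ((T^^s) b) b < 1/real (Suc k)"
      using H by simp
    then show ?thesis unfolding pick_def by (rule someI_ex[where P="\<lambda>s. s \<ge> N \<and> _ s"]) 
  qed
  define n where "n = rec_nat (pick 0 0) (\<lambda>k m. pick (Suc m) (Suc k))"
  have n0: "n 0 = pick 0 0" and nS: "n (Suc k) = pick (Suc (n k)) (Suc k)" for k by (simp_all add: n_def)
  have nP: "dist ((T^^n k) a) b < 1/real (Suc k) \<and> dist ((T^^n k) b) b < 1/real (Suc k)" for k
  proof (cases k)
    case 0 then show ?thesis using pickP[of 0 0] n0 by metis
  next
    case (Suc j) then show ?thesis using pickP[of "Suc (n j)" "Suc j"] nS[of j] by metis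
  qed
  have "strict_mono n" unfolding strict_mono_Suc_iff
  proof
    fix k show "n k < n (Suc k)" using pickP[of "Suc (n k)" "Suc k"] by (simp add: nS)
  qed
  moreover have lim: "(\<lambda>k. f k) \<longlonglongrightarrow> b" if fk: "\<And>k. dist (f k) b < 1/real (Suc k)" for f
  proof (rule tendstoI)
    fix e :: real assume "e > 0"
    then obtain N where N: "1 / real (Suc N) < e" using nat_approx_posE by blast
    have "dist (f k) b < e" if "k \<ge> N" for k
    proof -
      have "1 / real (Suc k) \<le> 1 / real (Suc N)" using that by (simp add: frac_le)
      then show ?thesis using fk[of k] N by linarith
    qed
    then show "eventually (\<lambda>k. dist (f k) b < e) sequentially" unfolding eventually_sequentially by blast
  qed
  ultimately show ?thesis unfolding strongly_proximal_def using nP by (blast intro: lim)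
qed

lemma dir_fwd:
  fixes X :: "'a::metric_space set" and T :: "'a \<Rightarrow> 'a"
  assumes m: "tds X T" and L: "strongly_F_ip_sensitive X T"
  shows "\<exists>\<delta>>0. \<forall>U. openin (top_of_set X) U \<and> U \<noteq> {} \<longrightarrow>
       (\<exists>x\<in>U. \<exists>y\<in>X. dist x y > \<delta> \<and> strongly_proximal T x y)"
proof -
  have cX: "compact X" and XN: "X \<noteq> {}" and cont: "continuous_on X T" and TX: "T ` X \<subseteq> X"
    using m unfolding tds_def by auto
  obtain \<delta> where d: "\<delta> > 0" and H: "\<forall>U. openin (top_of_set X) U \<and> U \<noteq> {} \<longrightarrow>
        (\<exists>x\<in>U. \<exists>y\<in>U. {n. dist ((T ^^ n) x) ((T ^^ n) y) > \<delta>} \<in> F_ip)"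
    using L unfolding strongly_F_ip_sensitive_def by blast
  have "\<forall>U. openin (top_of_set X) U \<and> U \<noteq> {} \<longrightarrow>
       (\<exists>x\<in>U. \<exists>y\<in>X. dist x y > \<delta>/4 \<and> strongly_proximal T x y)"
  proof (intro allI impI)
    fix U assume U: "openin (top_of_set X) U \<and> U \<noteq> {}"
    then obtain u0 where u0: "u0 \<in> U" by blast
    define U' where "U' = U \<inter> ball u0 (\<delta>/8)"
    have U'o: "openin (top_of_set X) U'" unfolding U'_def using U by (simp add: openin_Int_open)
    have "u0 \<in> U'" using u0 d by (simp add: U'_def)
    then obtain x y where x: "x \<in> U'" and y: "y \<in> U'" and F: "{n. dist ((T ^^ n) x) ((T ^^ n) y) > \<delta>} \<in> F_ip"
      using H U'o by blast
    have xX: "x \<in> X" and yX: "y \<in> X" using x y U'o openin_imp_subset by blast+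
    obtain p where pp: "\<forall>i. p i > 0" and FSp: "FS p \<subseteq> {n. dist ((T ^^ n) x) ((T ^^ n) y) > \<delta>}"
      using F unfolding F_ip_def by blast
    obtain u where uX: "\<forall>z\<in>X. u z \<in> X" and uu: "u \<circ> u = u" and ucl: "\<forall>j. u \<in> closure (R X T ` G p j)"
      using idem_exists[OF cX XN cont TX pp] by blast
    define a where "a = u x"
    define b where "b = u y"
    have aX: "a \<in> X" and bX: "b \<in> X" using uX xX yX by (simp_all add: a_def b_def)
    have ua: "u a = a" and ub: "u b = b" using uu by (simp_all add: a_def b_def fun_eq_iff comp_def)
    have freq: "\<exists>s\<ge>N. s \<in> FS p \<and> dist ((T^^s) x) a < e \<and> dist ((T^^s) y) b < e
        \<and> dist ((T^^s) a) a < e \<and> dist ((T^^s) b) b < e" if e: "e > 0" for e N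
    proof -
      obtain s where s: "s \<in> G p N" and close: "\<forall>i\<in>{x,y,a,b}. dist (R X T s i) (u i) < e"
        using approx[OF ucl[rule_format, of N] _ e, of "{x,y,a,b}"] by auto
      have "s \<ge> N" "s \<in> FS p" using s G_ge G_FS by blast+
      moreover have "dist ((T^^s) x) a < e \<and> dist ((T^^s) y) b < e \<and> dist ((T^^s) a) a < e \<and> dist ((T^^s) b) b < e"
        using close xX yX aX bX ua ub by (simp add: R_def a_def b_def)
      ultimately show ?thesis by blast
    qed
    obtain s where s: "s \<in> FS p" "dist ((T^^s) x) a < \<delta>/8" "dist ((T^^s) y) b < \<delta>/8"
      using freq[of "\<delta>/8" 0] d by auto
    have dab: "dist ((T^^s) x) ((T^^s) y) > \<delta>" using s FSp by blast
    have "dist ((T^^s) x) ((T^^s) y) \<le> dist ((T^^s) x) a + dist a ((T^^s) y)" by (rule dist_triangle)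
    moreover have "dist a ((T^^s) y) \<le> dist a b + dist b ((T^^s) y)" by (rule dist_triangle)
    moreover have "dist b ((T^^s) y) < \<delta>/8" using s by (simp add: dist_commute)
    ultimately have ab: "dist a b > 3*\<delta>/4" using s(2) dab by argo
    have xy: "dist x y < \<delta>/4"
    proof -
      have "dist x u0 < \<delta>/8" "dist y u0 < \<delta>/8" using x y by (auto simp: U'_def dist_commute)
      then show ?thesis using dist_triangle[of x y u0] by (simp add: dist_commute)
    qed
    have "dist a b \<le> dist a x + dist x b" by (rule dist_triangle)
    moreover have "dist x b \<le> dist x y + dist y b" by (rule dist_triangle)
    ultimately have "dist a x + dist y b > \<delta>/2" using ab xy d by argo
    then have "dist x a > \<delta>/4 \<or> dist y b > \<delta>/4" by (simp add: dist_commute) argo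
    moreover have "strongly_proximal T x a"
      by (rule sp_of_freq) (use freq in blast)
    moreover have "strongly_proximal T y b"
      by (rule sp_of_freq) (use freq in blast)
    moreover have "x \<in> U" "y \<in> U" using x y by (auto simp: U'_def)
    ultimately show "\<exists>x\<in>U. \<exists>y\<in>X. dist x y > \<delta>/4 \<and> strongly_proximal T x y" using aX bX by blast
  qed
  then show ?thesis using d by (intro exI[of _ "\<delta>/4"]) auto
qed


theorem proposition4p15:
  fixes X :: "'a::metric_space set" and T :: "'a \<Rightarrow> 'a"
  assumes "minimal_tds X T"
  shows "strongly_F_ip_sensitive X T \<longleftrightarrow>
    (\<exists>\<delta>>0. \<forall>U. openin (top_of_set X) U \<and> U \<noteq> {} \<longrightarrow>
       (\<exists>x\<in>U. \<exists>y\<in>X. dist x y > \<delta> \<and> strongly_proximal T x y))"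
proof
  assume "strongly_F_ip_sensitive X T"
  moreover have "tds X T" using assms by (simp add: minimal_tds_def)
  ultimately show "\<exists>\<delta>>0. \<forall>U. openin (top_of_set X) U \<and> U \<noteq> {} \<longrightarrow>
       (\<exists>x\<in>U. \<exists>y\<in>X. dist x y > \<delta> \<and> strongly_proximal T x y)"
    using dir_fwd by blast
next
  assume "\<exists>\<delta>>0. \<forall>U. openin (top_of_set X) U \<and> U \<noteq> {} \<longrightarrow>
       (\<exists>x\<in>U. \<exists>y\<in>X. dist x y > \<delta> \<and> strongly_proximal T x y)"
  then obtain \<delta> where "\<delta> > 0" "\<forall>U. openin (top_of_set X) U \<and> U \<noteq> {} \<longrightarrow>
       (\<exists>x\<in>U. \<exists>y\<in>X. dist x y > \<delta> \<and> strongly_proximal T x y)" by blast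
  then show "strongly_F_ip_sensitive X T" using dir_back[OF assms] by blast
qed

end
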